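(* Let $K\ge3$, $V\ge1$, let $\phi_1,\dots,\phi_K\in\Delta_{V-1}$ have strictly positive entries, $p\in\Delta_{V-1}$, and $H(\theta)=\sum_{v=1}^Vp_v\log\big(\sum_{k=1}^K\theta_k\phi_k(v)\big)$. Let $\theta^*$ be a maximizer of $H$ on $\Delta_{K-1}$ with all coordinates strictly positive. Assume (B1): for every $v$, $\max_k\phi_k(v)$ is attained at a unique index $k(v)$; and that $\phi$ is $\varepsilon$-sparse with $\varepsilon<\varepsilon_0$. Let $X=\mathrm{diag}(1/\theta^*_1,\dots,1/\theta^*_K)$, $Y=-\nabla^2H(\theta^* )$, and $Z=X^{-1/2}YX^{-1/2}$. Then there exists $C>0$, independent of $\varepsilon$, such that $$\frac{\|Z-I\|_F}{\sqrt{\lambda_{\min}(Z)}}\le C\varepsilon.$$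
   Context: $\Delta_{d-1}=\{x\in\mathbb{R}^d:x_i\ge0,\sum_ix_i=1\}$. $X$ is the Hessian of $\theta\mapsto\mathrm{KL}(\theta^*|\theta)=\sum_k\theta^*_k\log(\theta^*_k/\theta_k)$ at $\theta=\theta^*$. $\phi$ is $\varepsilon$-sparse if $\varepsilon=\max_v\frac{\sum_{j\ne k(v)}\phi_j(v)}{\phi_{k(v)}(v)}$. With $\theta^*_{\min}=\min_k\theta^*_k$, $\theta^*_{\max}=\max_k\theta^*_k$, $C^{(1)}_{\max}=(\theta^*_{\max})^{1/2}/(\theta^*_{\min})^{3/2}$, $C^{(2)}_{\max}=\theta^*_{\max}/(\theta^*_{\min})^2$, and $F(\varepsilon)=4(C^{(2)}_{\max})^2K+K(K-1)(2C^{(1)}_{\max}+C^{(2)}_{\max}\varepsilon)^2$, $\varepsilon_0>0$ is the unique root of $\varepsilon\sqrt{F(\varepsilon)}=1/2$. $\lambda_{\min}(Z)$ is the smallest eigenvalue of the symmetric matrix $Z$, $\|\cdot\|_F$ the Frobenius norm. *)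

theory Defs
  imports "HOL-Analysis.Analysis"
begin

text \<open>Topic-model setting. Topics are indexed by a finite type 'k (K = CARD('k)),
  vocabulary words by naturals v < V. phi k v is the probability of word v in topic k.\<close>

definition in_simplex_vec :: "real^'k \<Rightarrow> bool" where
  "in_simplex_vec x \<longleftrightarrow> (\<forall>k. x $ k \<ge> 0) \<and> (\<Sum>k\<in>UNIV. x $ k) = 1"

definition in_simplex_nat :: "nat \<Rightarrow> (nat \<Rightarrow> real) \<Rightarrow> bool" where
  "in_simplex_nat V x \<longleftrightarrow> (\<forall>v<V. x v \<ge> 0) \<and> (\<Sum>v<V. x v) = 1"

definition Hfun :: "nat \<Rightarrow> (nat \<Rightarrow> real) \<Rightarrow> ('k::finite \<Rightarrow> nat \<Rightarrow> real) \<Rightarrow> real^'k \<Rightarrow> real" where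
  "Hfun V p phi \<theta> = (\<Sum>v<V. p v * ln (\<Sum>k\<in>UNIV. \<theta> $ k * phi k v))"

definition hessian :: "(real^'k \<Rightarrow> real) \<Rightarrow> real^'k \<Rightarrow> real^'k^'k" where
  "hessian f x = (\<chi> j k. deriv (\<lambda>s. deriv (\<lambda>t. f (x + t *\<^sub>R axis j 1 + s *\<^sub>R axis k 1)) 0) 0)"

definition diag_mat :: "('k \<Rightarrow> real) \<Rightarrow> real^'k^'k" where
  "diag_mat d = (\<chi> i j. if i = j then d i else 0)"

definition frob_norm :: "real^'k^'k \<Rightarrow> real" where
  "frob_norm A = sqrt (\<Sum>i\<in>UNIV. \<Sum>j\<in>UNIV. (A $ i $ j)\<^sup>2)"

definition lambda_min :: "real^'k^'k \<Rightarrow> real" where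
  "lambda_min A = Min {\<mu>. \<exists>x. x \<noteq> 0 \<and> A *v x = \<mu> *\<^sub>R x}"

definition kmax :: "('k \<Rightarrow> nat \<Rightarrow> real) \<Rightarrow> nat \<Rightarrow> 'k" where
  "kmax phi v = (THE k. \<forall>j. phi j v \<le> phi k v)"

definition sparsity :: "nat \<Rightarrow> ('k::finite \<Rightarrow> nat \<Rightarrow> real) \<Rightarrow> real" where
  "sparsity V phi = Max ((\<lambda>v. (\<Sum>j\<in>UNIV - {kmax phi v}. phi j v) / phi (kmax phi v) v) ` {..<V})"

definition Cmax1 :: "real \<Rightarrow> real \<Rightarrow> real" where
  "Cmax1 tmin tmax = sqrt tmax / (tmin powr (3/2))"

definition Cmax2 :: "real \<Rightarrow> real \<Rightarrow> real" where
  "Cmax2 tmin tmax = tmax / tmin\<^sup>2"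

definition Ffun :: "nat \<Rightarrow> real \<Rightarrow> real \<Rightarrow> real \<Rightarrow> real" where
  "Ffun K tmin tmax e = 4 * (Cmax2 tmin tmax)\<^sup>2 * real K
     + real K * (real K - 1) * (2 * Cmax1 tmin tmax + Cmax2 tmin tmax * e)\<^sup>2"

definition eps0 :: "nat \<Rightarrow> real \<Rightarrow> real \<Rightarrow> real" where
  "eps0 K tmin tmax = (THE e. e > 0 \<and> e * sqrt (Ffun K tmin tmax e) = 1/2)"

definition vmin :: "real^'k \<Rightarrow> real" where
  "vmin x = Min (range (\<lambda>k. x $ k))"

definition vmax :: "real^'k \<Rightarrow> real" where
  "vmax x = Max (range (\<lambda>k. x $ k))"

end

theory Submission
  imports Defs
begin



lemma sq_norm_vec: "(norm (x::real^'n))\<^sup>2 = (\<Sum>i\<in>UNIV. (x$i)\<^sup>2)"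
proof -
  have "(norm x)\<^sup>2 = x \<bullet> x" by (rule power2_norm_eq_inner)
  thus ?thesis by (simp add: inner_vec_def power2_eq_square)
qed

lemma mv_norm_le: "norm (B *v x) \<le> frob_norm B * norm (x::real^'n)"
proof -
  have "(norm (B *v x))\<^sup>2 = (\<Sum>i\<in>UNIV. ((B$i) \<bullet> x)\<^sup>2)"
    by (simp add: sq_norm_vec matrix_vector_mult_def inner_vec_def)
  also have "\<dots> \<le> (\<Sum>i\<in>UNIV. (norm (B$i))\<^sup>2 * (norm x)\<^sup>2)"
  proof (rule sum_mono)
    fix i
    have "\<bar>(B$i) \<bullet> x\<bar> \<le> norm (B$i) * norm x" by (rule Cauchy_Schwarz_ineq2)
    hence "\<bar>(B$i) \<bullet> x\<bar>\<^sup>2 \<le> (norm (B$i) * norm x)\<^sup>2" by (rule power_mono) simp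
    thus "((B$i) \<bullet> x)\<^sup>2 \<le> (norm (B$i))\<^sup>2 * (norm x)\<^sup>2" by (simp add: power_mult_distrib)
  qed
  also have "\<dots> = (frob_norm B * norm x)\<^sup>2"
    by (simp add: frob_norm_def power_mult_distrib sq_norm_vec sum_distrib_right sum_nonneg)
  finally have "(norm (B *v x))\<^sup>2 \<le> (frob_norm B * norm x)\<^sup>2" .
  moreover have "0 \<le> frob_norm B * norm x" by (simp add: frob_norm_def sum_nonneg)
  ultimately show ?thesis by (rule power2_le_imp_le)
qed

lemma eig_bound:
  assumes "x \<noteq> 0" "A *v x = \<mu> *\<^sub>R x"
  shows "\<bar>\<mu> - 1\<bar> \<le> frob_norm (A - mat 1)"
proof -
  have "(A - mat 1) *v x = (\<mu> - 1) *\<^sub>R x"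
    using assms by (simp add: matrix_vector_mult_diff_rdistrib algebra_simps)
  hence "\<bar>\<mu> - 1\<bar> * norm x \<le> frob_norm (A - mat 1) * norm x"
    using mv_norm_le[of "A - mat 1" x] by simp
  thus ?thesis using assms(1) by simp
qed

lemma sym_inner:
  assumes "\<And>i j. A$i$j = A$j$i"
  shows "x \<bullet> (A *v y) = (A *v x) \<bullet> (y::real^'n)"
proof -
  have "transpose A = A" using assms by (simp add: transpose_def vec_eq_iff)
  thus ?thesis by (metis dot_lmul_matrix inner_commute vector_transpose_matrix)
qed

lemma eig_finite:
  assumes "\<And>i j. A$i$j = A$j$i"
  shows "finite {\<mu>. \<exists>x. x \<noteq> 0 \<and> A *v x = \<mu> *\<^sub>R (x::real^'n)}"
proof -
  let ?E = "{\<mu>. \<exists>x. x \<noteq> 0 \<and> A *v x = \<mu> *\<^sub>R (x::real^'n)}"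
  define ev where "ev \<mu> = (SOME x. x \<noteq> 0 \<and> A *v x = \<mu> *\<^sub>R x)" for \<mu>
  have ev: "ev \<mu> \<noteq> 0 \<and> A *v ev \<mu> = \<mu> *\<^sub>R ev \<mu>" if "\<mu> \<in> ?E" for \<mu>
    using that unfolding ev_def by (metis (mono_tags, lifting) mem_Collect_eq someI_ex)
  have orth: "ev \<mu> \<bullet> ev \<nu> = 0" if "\<mu> \<in> ?E" "\<nu> \<in> ?E" "\<mu> \<noteq> \<nu>" for \<mu> \<nu>
  proof -
    have "\<nu> * (ev \<mu> \<bullet> ev \<nu>) = ev \<mu> \<bullet> (A *v ev \<nu>)" using ev[OF that(2)] by simp
    also have "\<dots> = (A *v ev \<mu>) \<bullet> ev \<nu>" by (rule sym_inner[OF assms])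
    also have "\<dots> = \<mu> * (ev \<mu> \<bullet> ev \<nu>)" using ev[OF that(1)] by simp
    finally show ?thesis using that(3) by simp
  qed
  have inj: "inj_on ev ?E"
  proof (rule inj_onI)
    fix a b assume ab: "a \<in> ?E" "b \<in> ?E" "ev a = ev b"
    show "a = b"
    proof (rule ccontr)
      assume "a \<noteq> b"
      hence "ev a \<bullet> ev b = 0" using orth ab by blast
      thus False using ab ev[OF ab(1)] by simp
    qed
  qed
  have po: "pairwise orthogonal (ev ` ?E)"
    unfolding pairwise_def orthogonal_def
  proof (intro ballI impI)
    fix u w assume "u \<in> ev ` ?E" "w \<in> ev ` ?E" "u \<noteq> w"
    then obtain a b where "a \<in> ?E" "b \<in> ?E" "u = ev a" "w = ev b" "a \<noteq> b" by blast
    thus "u \<bullet> w = 0" using orth by blast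
  qed
  have "0 \<notin> ev ` ?E" using ev by force
  hence "independent (ev ` ?E)"
    using pairwise_orthogonal_independent po by blast
  hence "finite (ev ` ?E)" using independent_bound by blast
  thus ?thesis using inj finite_imageD by blast
qed



lemma quad_nonneg_zero:
  fixes c d :: real
  assumes "\<And>t. 0 \<le> 2*t*c + t\<^sup>2*d" "0 \<le> c"
  shows "c = 0"
proof (rule ccontr)
  assume "c \<noteq> 0" hence cp: "c > 0" using assms(2) by simp
  define t where "t = - c / (\<bar>d\<bar> + 1)"
  have dp: "\<bar>d\<bar> + 1 > 0" by simp
  have "t\<^sup>2*d \<le> t\<^sup>2*\<bar>d\<bar>" by (simp add: mult_left_mono)
  also have "\<dots> = c\<^sup>2 * \<bar>d\<bar> / (\<bar>d\<bar>+1)\<^sup>2" by (simp add: t_def power_divide)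
  also have "\<dots> \<le> c\<^sup>2 / (\<bar>d\<bar>+1)"
    using dp by (simp add: power2_eq_square divide_simps mult_left_mono)
  finally have "2*t*c + t\<^sup>2*d \<le> -2*c\<^sup>2/(\<bar>d\<bar>+1) + c\<^sup>2/(\<bar>d\<bar>+1)"
    by (simp add: t_def power2_eq_square)
  also have "\<dots> < 0" using cp dp by (simp add: divide_simps)
  finally show False using assms(1)[of t] by simp
qed

lemma eig_exists:
  assumes sym: "\<And>i j. A$i$j = A$j$i"
  shows "\<exists>\<mu> x. x \<noteq> 0 \<and> A *v x = \<mu> *\<^sub>R (x::real^'n)"
proof -
  define q where "q x = x \<bullet> (A *v x)" for x :: "real^'n"
  have cont: "continuous_on (sphere 0 1) q"
    unfolding q_def by (intro continuous_intros linear_continuous_on matrix_vector_mul_bounded_linear)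
  have ne: "sphere (0::real^'n) 1 \<noteq> {}"
    using sphere_eq_empty[of "0::real^'n" 1] by simp
  obtain x where x: "x \<in> sphere 0 1" and xmin: "\<And>y. y \<in> sphere 0 1 \<Longrightarrow> q x \<le> q y"
    using continuous_attains_inf[OF compact_sphere ne cont] by blast
  have nx: "norm x = 1" using x by simp
  define l where "l = q x"
  have hom: "l * (norm z)\<^sup>2 \<le> q z" for z
  proof (cases "z = 0")
    case True thus ?thesis by (simp add: q_def)
  next
    case False
    define y where "y = (1 / norm z) *\<^sub>R z"
    have "y \<in> sphere 0 1" using False by (simp add: y_def)
    hence "l \<le> q y" using xmin l_def by simp
    also have "q y = q z / (norm z)\<^sup>2"
      by (simp add: q_def y_def matrix_vector_mult_scaleR power2_eq_square)
    finally show ?thesis using False by (simp add: divide_simps)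
  qed
  define w where "w = A *v x - l *\<^sub>R x"
  have "0 \<le> 2*t*(w \<bullet> w) + t\<^sup>2*(q w - l * (w \<bullet> w))" for t
  proof -
    have h: "l * (norm (x + t *\<^sub>R w))\<^sup>2 \<le> q (x + t *\<^sub>R w)" by (rule hom)
    have e1: "(norm (x + t *\<^sub>R w))\<^sup>2 = 1 + 2*t*(x \<bullet> w) + t\<^sup>2*(w \<bullet> w)"
    proof -
      have xx: "x \<bullet> x = 1" using nx power2_norm_eq_inner[of x] by simp
      have "(norm (x + t *\<^sub>R w))\<^sup>2 = (x + t *\<^sub>R w) \<bullet> (x + t *\<^sub>R w)" by (rule power2_norm_eq_inner)
      thus ?thesis using xx by (simp add: inner_add_left inner_add_right
          inner_commute power2_eq_square algebra_simps)
    qed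
    have s: "x \<bullet> (A *v w) = (A *v x) \<bullet> w" by (rule sym_inner[OF sym])
    have e2: "q (x + t *\<^sub>R w) = l + 2*t*((A *v x) \<bullet> w) + t\<^sup>2 * q w"
      using s by (simp add: q_def l_def matrix_vector_right_distrib matrix_vector_mult_scaleR
          inner_add_left inner_add_right inner_commute power2_eq_square algebra_simps)
    have e3: "(A *v x) \<bullet> w = w \<bullet> w + l * (x \<bullet> w)"
      by (simp add: w_def inner_diff_left inner_diff_right inner_commute algebra_simps)
    show ?thesis using h e1 e2 e3 by (simp add: algebra_simps)
  qed
  hence "w \<bullet> w = 0" by (intro quad_nonneg_zero) auto
  hence "A *v x = l *\<^sub>R x" by (simp add: w_def)
  moreover have "x \<noteq> 0" using nx by auto
  ultimately show ?thesis by blast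
qed



lemma C1_ge: assumes "0 < a" "a \<le> b" shows "1/a \<le> Cmax1 a b"
proof -
  have "a powr (3/2) = a powr (1 + 1/2)" by simp
  also have "\<dots> = a powr 1 * a powr (1/2)" by (rule powr_add)
  also have "\<dots> = a * sqrt a" using assms(1) by (simp add: powr_half_sqrt)
  finally have pa: "a powr (3/2) = a * sqrt a" .
  have "sqrt a \<le> sqrt b" using assms by simp
  hence "sqrt a / (a * sqrt a) \<le> sqrt b / (a * sqrt a)"
    by (rule divide_right_mono) (use assms(1) in simp)
  moreover have "sqrt a / (a * sqrt a) = 1/a" using assms(1) by simp
  ultimately have "1/a \<le> sqrt b / (a * sqrt a)" by linarith
  thus ?thesis by (simp add: Cmax1_def pa)
qed

lemma C2_ge: assumes "0 < a" "a \<le> b" shows "1/a \<le> Cmax2 a b"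
  using assms by (simp add: Cmax2_def power2_eq_square divide_simps)

lemma F_lower:
  assumes "0 < a" "a \<le> b" "K \<ge> 1" "0 \<le> e"
  shows "(2*real K/a)\<^sup>2 \<le> Ffun K a b e"
proof -
  have c1: "1/a \<le> Cmax1 a b" and c2: "1/a \<le> Cmax2 a b" using C1_ge C2_ge assms by auto
  have p: "0 \<le> 1/a" using assms by simp
  have "0 \<le> Cmax2 a b" using c2 p by linarith
  hence c2e: "0 \<le> Cmax2 a b * e" using assms(4) by simp
  have "(1/a)\<^sup>2 \<le> (Cmax2 a b)\<^sup>2" using c2 p power_mono by blast
  have A: "4 * (1/a)\<^sup>2 * real K \<le> 4 * (Cmax2 a b)\<^sup>2 * real K"
    using mult_right_mono[OF \<open>(1/a)\<^sup>2 \<le> (Cmax2 a b)\<^sup>2\<close>, of "real K"] by simp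
  have "2*(1/a) \<le> 2 * Cmax1 a b + Cmax2 a b * e" using c1 c2e by simp
  hence "(2*(1/a))\<^sup>2 \<le> (2 * Cmax1 a b + Cmax2 a b * e)\<^sup>2" using p power_mono by fastforce
  moreover have "0 \<le> real K * (real K - 1)" using assms(3) by simp
  ultimately have B: "real K * (real K - 1) * (2*(1/a))\<^sup>2 \<le> real K * (real K - 1) * (2 * Cmax1 a b + Cmax2 a b * e)\<^sup>2"
    by (rule mult_left_mono)
  have "(2*real K/a)\<^sup>2 = 4 * (1/a)\<^sup>2 * real K + real K * (real K - 1) * (2*(1/a))\<^sup>2"
    using assms(1) by (simp add: power2_eq_square field_simps)
  also have "\<dots> \<le> Ffun K a b e" using A B by (simp add: Ffun_def)
  finally show ?thesis .
qed

lemma F_mono: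
  assumes "0 < a" "a \<le> b" "K \<ge> 1" "0 \<le> e" "e \<le> e'"
  shows "Ffun K a b e \<le> Ffun K a b e'"
proof -
  have c1: "0 \<le> Cmax1 a b" and c2: "0 \<le> Cmax2 a b"
    using C1_ge C2_ge assms by (smt (verit) divide_nonneg_nonneg)+
  have "2 * Cmax1 a b + Cmax2 a b * e \<le> 2 * Cmax1 a b + Cmax2 a b * e'"
    using c2 assms by (simp add: mult_left_mono)
  moreover have "0 \<le> 2 * Cmax1 a b + Cmax2 a b * e" using c1 c2 assms by simp
  ultimately have "(2 * Cmax1 a b + Cmax2 a b * e)\<^sup>2 \<le> (2 * Cmax1 a b + Cmax2 a b * e')\<^sup>2"
    using power_mono by blast
  moreover have "0 \<le> real K * (real K - 1)" using assms(3) by simp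
  ultimately show ?thesis unfolding Ffun_def by (simp add: mult_left_mono)
qed

lemma h_strict:
  assumes "0 < a" "a \<le> b" "K \<ge> 1" "0 \<le> e" "e < e'"
  shows "e * sqrt (Ffun K a b e) < e' * sqrt (Ffun K a b e')"
proof -
  have "(2*real K/a)\<^sup>2 \<le> Ffun K a b e'" using F_lower assms by simp
  moreover have "0 < (2*real K/a)\<^sup>2" using assms by simp
  ultimately have "0 < Ffun K a b e'" by linarith
  hence pos: "0 < sqrt (Ffun K a b e')" by simp
  have "sqrt (Ffun K a b e) \<le> sqrt (Ffun K a b e')" using F_mono assms by simp
  hence "e * sqrt (Ffun K a b e) \<le> e * sqrt (Ffun K a b e')" using assms(4) mult_left_mono by blast
  also have "\<dots> < e' * sqrt (Ffun K a b e')" using pos assms(5) by simp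
  finally show ?thesis .
qed

lemma eps0_prop:
  assumes "0 < a" "a \<le> b" "b \<le> 1" "K \<ge> 1"
  shows "eps0 K a b > 0 \<and> eps0 K a b * sqrt (Ffun K a b (eps0 K a b)) = 1/2"
proof -
  let ?h = "\<lambda>e. e * sqrt (Ffun K a b e)"
  have cont: "continuous_on {0..1} ?h"
    unfolding Ffun_def by (intro continuous_intros)
  have "(2*real K/a)\<^sup>2 \<le> Ffun K a b 1" using F_lower assms by simp
  hence "sqrt ((2*real K/a)\<^sup>2) \<le> sqrt (Ffun K a b 1)" by (rule real_sqrt_le_mono)
  hence "2*real K/a \<le> sqrt (Ffun K a b 1)" using assms(1) by simp
  moreover have "2*real K/a \<ge> 2" using assms by (simp add: divide_simps)
  ultimately have "1/2 \<le> ?h 1" by simp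
  then obtain e where e: "0 \<le> e" "e \<le> 1" "?h e = 1/2"
    using IVT'[of ?h 0 "1/2" 1] cont by auto
  have epos: "e > 0" using e by (cases "e = 0") auto
  have ex: "\<exists>!e. e > 0 \<and> ?h e = 1/2"
  proof (rule ex1I[of _ e])
    show "e > 0 \<and> ?h e = 1/2" using epos e by simp
    fix y assume y: "y > 0 \<and> ?h y = 1/2"
    show "y = e"
    proof (rule ccontr)
      assume "y \<noteq> e"
      hence "y < e \<or> e < y" by linarith
      thus False using h_strict[of a b K y e] h_strict[of a b K e y] assms y e epos by auto
    qed
  qed
  show ?thesis unfolding eps0_def using theI'[OF ex] .
qed

lemma eps_part:
  assumes "0 < a" "a \<le> b" "b \<le> 1" "K \<ge> 1" "0 \<le> e" "e < eps0 K a b"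
  shows "2*real K*e/a \<le> e * sqrt (Ffun K a b e)" "e * sqrt (Ffun K a b e) < 1/2"
proof -
  have "sqrt ((2*real K/a)\<^sup>2) \<le> sqrt (Ffun K a b e)"
    using F_lower assms real_sqrt_le_mono by blast
  hence "2*real K/a \<le> sqrt (Ffun K a b e)" using assms by simp
  hence "e * (2*real K/a) \<le> e * sqrt (Ffun K a b e)" using assms(5) mult_left_mono by blast
  moreover have "2*real K*e/a = e * (2*real K/a)" by simp
  ultimately show "2*real K*e/a \<le> e * sqrt (Ffun K a b e)" by linarith
  show "e * sqrt (Ffun K a b e) < 1/2"
    using h_strict[of a b K e "eps0 K a b"] eps0_prop[of a b K] assms by simp
qed



lemma sum_axis: "(\<Sum>i\<in>UNIV. axis j 1 $ i * f i) = (f::'k::finite \<Rightarrow> real) j"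
proof -
  have "(\<Sum>i\<in>UNIV. axis j 1 $ i * f i) = (\<Sum>i\<in>UNIV. if i = j then f i else 0)"
    by (rule sum.cong) (auto simp: axis_def)
  thus ?thesis by simp
qed

lemma comp_sum1:
  "(\<Sum>i\<in>UNIV. (\<theta> + t *\<^sub>R axis j 1 + u *\<^sub>R axis k 1)$i * f i)
     = (\<Sum>i\<in>UNIV. \<theta>$i * f i) + t * f j + u * (f::'k::finite\<Rightarrow>real) k"
proof -
  have "(\<Sum>i\<in>UNIV. (\<theta> + t *\<^sub>R axis j 1 + u *\<^sub>R axis k 1)$i * f i)
     = (\<Sum>i\<in>UNIV. \<theta>$i * f i + t * (axis j 1 $ i * f i) + u * (axis k 1 $ i * f i))"
    by (rule sum.cong) (auto simp: algebra_simps)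
  also have "\<dots> = (\<Sum>i\<in>UNIV. \<theta>$i * f i) + t * f j + u * f k"
    by (simp add: sum.distrib sum_distrib_left[symmetric] sum_axis)
  finally show ?thesis .
qed

lemma comp_sum2:
  "(\<Sum>i\<in>UNIV. (\<theta> + t *\<^sub>R (axis j 1 - axis k 1))$i * f i)
     = (\<Sum>i\<in>UNIV. \<theta>$i * f i) + t * ((f::'k::finite\<Rightarrow>real) j - f k)"
proof -
  have "(\<Sum>i\<in>UNIV. (\<theta> + t *\<^sub>R (axis j 1 - axis k 1))$i * f i)
     = (\<Sum>i\<in>UNIV. \<theta>$i * f i + t * (axis j 1 $ i * f i) - t * (axis k 1 $ i * f i))"
    by (rule sum.cong) (auto simp: algebra_simps)
  also have "\<dots> = (\<Sum>i\<in>UNIV. \<theta>$i * f i) + t * (f j - f k)"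
    by (simp add: sum.distrib sum_subtractf sum_distrib_left[symmetric] sum_axis right_diff_distrib)
  finally show ?thesis .
qed

lemma deriv_lnsum:
  assumes "\<forall>v<V. 0 < a v"
  shows "((\<lambda>t. \<Sum>v<V. p v * ln (a v + t * b v)) has_real_derivative (\<Sum>v<V. p v * b v / a v)) (at 0)"
proof (rule DERIV_sum)
  fix v assume "v \<in> {..<V}"
  hence av: "0 < a v" using assms by simp
  show "((\<lambda>t. p v * ln (a v + t * b v)) has_real_derivative p v * b v / a v) (at 0)"
    using av by (auto intro!: derivative_eq_intros simp: field_simps)
qed

lemma deriv_recsum:
  assumes "\<forall>v<V. 0 < a v"
  shows "((\<lambda>u. \<Sum>v<V. c v / (a v + u * b v)) has_real_derivative (\<Sum>v<V. - (c v * b v / (a v)\<^sup>2))) (at 0)"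
proof (rule DERIV_sum)
  fix v assume "v \<in> {..<V}"
  hence av: "0 < a v" using assms by simp
  show "((\<lambda>u. c v / (a v + u * b v)) has_real_derivative - (c v * b v / (a v)\<^sup>2)) (at 0)"
    using av by (auto intro!: derivative_eq_intros simp: power2_eq_square field_simps)
qed



lemma hess_entry:
  fixes phi :: "'k::finite \<Rightarrow> nat \<Rightarrow> real" and \<theta> :: "real^'k"
  assumes pphi: "\<forall>k. \<forall>v<V. phi k v > 0" and pth: "\<forall>k. \<theta>$k > 0"
  shows "hessian (Hfun V p phi) \<theta> $ j $ k
     = (\<Sum>v<V. - (p v * phi j v * phi k v / (\<Sum>i\<in>UNIV. \<theta>$i * phi i v)\<^sup>2))"
proof -
  define s where "s v = (\<Sum>i\<in>UNIV. \<theta>$i * phi i v)" for v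
  have spos: "s v > 0" if "v < V" for v
    unfolding s_def using pphi pth that by (intro sum_pos) auto
  define c where "c = Min (insert 1 ((\<lambda>v. s v / phi k v) ` {..<V}))"
  have cpos: "c > 0" unfolding c_def using spos pphi by (auto simp: Min_gr_iff)
  have cle: "c \<le> s v / phi k v" if "v < V" for v
    unfolding c_def using that by (intro Min_le) auto
  define N where "N = {-c<..}"
  have Npos: "s v + u * phi k v > 0" if "u \<in> N" "v < V" for u v
  proof -
    have pk: "phi k v > 0" using pphi that by auto
    have "c * phi k v \<le> s v" using cle[OF that(2)] pk by (simp add: pos_le_divide_eq)
    moreover have "-c * phi k v < u * phi k v"
      using mult_strict_right_mono[of "-c" u "phi k v"] that(1) pk by (simp add: N_def)
    ultimately show ?thesis by linarith
  qed
  have inner: "deriv (\<lambda>t. Hfun V p phi (\<theta> + t *\<^sub>R axis j 1 + u *\<^sub>R axis k 1)) 0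
       = (\<Sum>v<V. p v * phi j v / (s v + u * phi k v))" if "u \<in> N" for u
  proof -
    have eq: "(\<lambda>t. Hfun V p phi (\<theta> + t *\<^sub>R axis j 1 + u *\<^sub>R axis k 1))
        = (\<lambda>t. \<Sum>v<V. p v * ln ((s v + u * phi k v) + t * phi j v))"
      by (rule ext) (simp only: Hfun_def comp_sum1 s_def, simp add: algebra_simps)
    have "((\<lambda>t. \<Sum>v<V. p v * ln ((s v + u * phi k v) + t * phi j v)) has_real_derivative
           (\<Sum>v<V. p v * phi j v / (s v + u * phi k v))) (at 0)"
      using Npos[OF that] by (intro deriv_lnsum) auto
    thus ?thesis unfolding eq by (rule DERIV_imp_deriv)
  qed
  have "((\<lambda>u. \<Sum>v<V. (p v * phi j v) / (s v + u * phi k v)) has_real_derivative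
          (\<Sum>v<V. - ((p v * phi j v) * phi k v / (s v)\<^sup>2))) (at 0)"
    using spos by (intro deriv_recsum) auto
  hence "((\<lambda>u. deriv (\<lambda>t. Hfun V p phi (\<theta> + t *\<^sub>R axis j 1 + u *\<^sub>R axis k 1)) 0) has_real_derivative
          (\<Sum>v<V. - ((p v * phi j v) * phi k v / (s v)\<^sup>2))) (at 0)"
    by (rule has_field_derivative_transform_within_open[where S = N])
       (use cpos inner in \<open>auto simp: N_def\<close>)
  hence "deriv (\<lambda>u. deriv (\<lambda>t. Hfun V p phi (\<theta> + t *\<^sub>R axis j 1 + u *\<^sub>R axis k 1)) 0) 0
        = (\<Sum>v<V. - ((p v * phi j v) * phi k v / (s v)\<^sup>2))"
    by (rule DERIV_imp_deriv)
  thus ?thesis by (simp add: hessian_def s_def)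
qed

lemma kkt:
  fixes phi :: "'k::finite \<Rightarrow> nat \<Rightarrow> real" and \<theta> :: "real^'k"
  assumes pphi: "\<forall>k. \<forall>v<V. phi k v > 0" and pth: "\<forall>k. \<theta>$k > 0"
    and simp_th: "in_simplex_vec \<theta>" and simp_p: "in_simplex_nat V p"
    and maxi: "\<forall>\<theta>'. in_simplex_vec \<theta>' \<longrightarrow> Hfun V p phi \<theta>' \<le> Hfun V p phi \<theta>"
  shows "(\<Sum>v<V. p v * phi k v / (\<Sum>i\<in>UNIV. \<theta>$i * phi i v)) = 1"
proof -
  define s where "s v = (\<Sum>i\<in>UNIV. \<theta>$i * phi i v)" for v
  have spos: "s v > 0" if "v < V" for v
    unfolding s_def using pphi pth that by (intro sum_pos) auto
  define G where "G k = (\<Sum>v<V. p v * phi k v / s v)" for k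
  have eqG: "G j = G k" for j k
  proof -
    define d where "d = min (\<theta>$j) (\<theta>$k)"
    have dpos: "d > 0" using pth by (simp add: d_def)
    have "((\<lambda>t. Hfun V p phi (\<theta> + t *\<^sub>R (axis j 1 - axis k 1))) has_real_derivative G j - G k) (at 0)"
    proof -
      have eq: "(\<lambda>t. Hfun V p phi (\<theta> + t *\<^sub>R (axis j 1 - axis k 1)))
          = (\<lambda>t. \<Sum>v<V. p v * ln (s v + t * (phi j v - phi k v)))"
        by (rule ext) (simp only: Hfun_def comp_sum2 s_def)
      have "G j - G k = (\<Sum>v<V. p v * (phi j v - phi k v) / s v)"
        by (simp add: G_def sum_subtractf[symmetric] diff_divide_distrib right_diff_distrib)
      thus ?thesis unfolding eq using spos by (simp add: deriv_lnsum)
    qed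
    moreover have "\<forall>y. \<bar>0 - y\<bar> < d \<longrightarrow> Hfun V p phi (\<theta> + y *\<^sub>R (axis j 1 - axis k 1))
                       \<le> Hfun V p phi (\<theta> + 0 *\<^sub>R (axis j 1 - axis k 1))"
    proof (intro allI impI)
      fix y assume y: "\<bar>0 - y\<bar> < d"
      have "in_simplex_vec (\<theta> + y *\<^sub>R (axis j 1 - axis k 1))"
        unfolding in_simplex_vec_def
      proof (intro conjI allI)
        fix i
        have "\<theta>$i + y * (axis j 1 $ i - axis k 1 $ i) \<ge> 0"
          using y pth[rule_format, of i] unfolding d_def axis_def by (auto split: if_splits)
        thus "(\<theta> + y *\<^sub>R (axis j 1 - axis k 1)) $ i \<ge> 0" by simp
      next
        have "(\<Sum>i\<in>UNIV. (\<theta> + y *\<^sub>R (axis j 1 - axis k 1)) $ i * (\<lambda>_. 1) i)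
             = (\<Sum>i\<in>UNIV. \<theta>$i * (\<lambda>_. 1) i) + y * (1 - 1)"
          by (rule comp_sum2)
        thus "(\<Sum>i\<in>UNIV. (\<theta> + y *\<^sub>R (axis j 1 - axis k 1)) $ i) = 1"
          using simp_th by (simp add: in_simplex_vec_def)
      qed
      thus "Hfun V p phi (\<theta> + y *\<^sub>R (axis j 1 - axis k 1))
               \<le> Hfun V p phi (\<theta> + 0 *\<^sub>R (axis j 1 - axis k 1))" using maxi by simp
    qed
    ultimately have "G j - G k = 0" by (rule DERIV_local_max[OF _ dpos])
    thus ?thesis by simp
  qed
  have "(\<Sum>i\<in>UNIV. \<theta>$i * G i) = (\<Sum>i\<in>UNIV. \<Sum>v<V. p v / s v * (\<theta>$i * phi i v))"
    unfolding G_def sum_distrib_left by (intro sum.cong refl) simp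
  also have "\<dots> = (\<Sum>v<V. \<Sum>i\<in>UNIV. p v / s v * (\<theta>$i * phi i v))"
    by (rule sum.swap)
  also have "\<dots> = (\<Sum>v<V. p v / s v * s v)"
    unfolding s_def sum_distrib_left by simp
  also have "\<dots> = (\<Sum>v<V. p v * s v / s v)" by simp
  also have "\<dots> = (\<Sum>v<V. p v)"
  proof (rule sum.cong)
    fix v assume "v \<in> {..<V}"
    hence "s v > 0" using spos by simp
    thus "p v * s v / s v = p v" by simp
  qed (rule refl)
  also have "\<dots> = 1" using simp_p by (simp add: in_simplex_nat_def)
  finally have "(\<Sum>i\<in>UNIV. \<theta>$i * G i) = 1" .
  moreover have "(\<Sum>i\<in>UNIV. \<theta>$i * G i) = (\<Sum>i\<in>UNIV. \<theta>$i * G k)"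
    by (intro sum.cong refl) (metis eqG)
  moreover have "(\<Sum>i\<in>UNIV. \<theta>$i * G k) = G k * (\<Sum>i\<in>UNIV. \<theta>$i)"
    by (simp add: sum_distrib_left mult.commute)
  ultimately show ?thesis using simp_th by (simp add: in_simplex_vec_def G_def s_def)
qed




lemma diag_mult_entry:
  "(diag_mat d ** A ** diag_mat d) $ i $ j = d i * A $ i $ j * d (j::'k::finite)"
proof -
  have "(diag_mat d ** A) $ i $ l = d i * A $ i $ l" for l
  proof -
    have "(diag_mat d ** A) $ i $ l = (\<Sum>k\<in>UNIV. (diag_mat d) $ i $ k * A $ k $ l)"
      by (simp add: matrix_matrix_mult_def)
    also have "\<dots> = (\<Sum>k\<in>UNIV. if k = i then d i * A $ i $ l else 0)"
      by (rule sum.cong) (auto simp: diag_mat_def)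
    finally show ?thesis by simp
  qed
  hence "(diag_mat d ** A ** diag_mat d) $ i $ j = (\<Sum>l\<in>UNIV. d i * A $ i $ l * (diag_mat d) $ l $ j)"
    by (simp add: matrix_matrix_mult_def)
  also have "\<dots> = (\<Sum>l\<in>UNIV. if l = j then d i * A $ i $ j * d j else 0)"
    by (rule sum.cong) (auto simp: diag_mat_def)
  also have "\<dots> = d i * A $ i $ j * d j" by simp
  finally show ?thesis .
qed

lemma main_bound:
  fixes phi :: "'k::finite \<Rightarrow> nat \<Rightarrow> real" and \<theta> :: "real^'k"
  assumes V1: "V \<ge> 1"
    and pphi: "\<forall>k. \<forall>v<V. phi k v > 0"
    and simp_p: "in_simplex_nat V p"
    and simp_th: "in_simplex_vec \<theta>" and pth: "\<forall>k. \<theta>$k > 0"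
    and maxi: "\<forall>\<theta>'. in_simplex_vec \<theta>' \<longrightarrow> Hfun V p phi \<theta>' \<le> Hfun V p phi \<theta>"
    and eps_lt: "sparsity V phi < eps0 CARD('k) (vmin \<theta>) (vmax \<theta>)"
  defines "Z \<equiv> diag_mat (\<lambda>k. sqrt (\<theta>$k)) ** (- hessian (Hfun V p phi) \<theta>) ** diag_mat (\<lambda>k. sqrt (\<theta>$k))"
  shows "frob_norm (Z - mat 1) / sqrt (lambda_min Z) \<le> 3 * real CARD('k) / vmin \<theta> * sparsity V phi"
proof -
  define s where "s v = (\<Sum>i\<in>UNIV. \<theta>$i * phi i v)" for v
  have spos: "s v > 0" if "v < V" for v
    unfolding s_def using pphi pth that by (intro sum_pos) auto
  define r where "r k v = phi k v / s v" for k v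
  define tmin where "tmin = vmin \<theta>"
  define tmax where "tmax = vmax \<theta>"
  define eps where "eps = sparsity V phi"
  define K where "K = CARD('k)"
  have K1: "K \<ge> 1" unfolding K_def by (simp add: Suc_le_eq)
  have th_nonneg: "\<theta>$k \<ge> 0" for k using pth less_imp_le by blast
  have th_le1: "\<theta>$k \<le> 1" for k
  proof -
    have "\<theta>$k \<le> (\<Sum>i\<in>UNIV. \<theta>$i)" by (rule member_le_sum) (auto simp: th_nonneg)
    thus ?thesis using simp_th by (simp add: in_simplex_vec_def)
  qed
  have tmin_le: "tmin \<le> \<theta>$k" for k unfolding tmin_def vmin_def by (intro Min_le) auto
  have tmax_ge: "\<theta>$k \<le> tmax" for k unfolding tmax_def vmax_def by (intro Max_ge) auto
  have "tmin \<in> range (\<lambda>k. \<theta>$k)" unfolding tmin_def vmin_def by (intro Min_in) auto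
  hence tmin_pos: "tmin > 0" using pth by auto
  have "tmax \<in> range (\<lambda>k. \<theta>$k)" unfolding tmax_def vmax_def by (intro Max_in) auto
  hence tmax_le1: "tmax \<le> 1" using th_le1 by auto
  have tmin_tmax: "tmin \<le> tmax" using tmin_le tmax_ge order_trans by blast
  have G1: "(\<Sum>v<V. p v * r k v) = 1" for k
    using kkt[OF pphi pth simp_th simp_p maxi, of k] by (simp add: r_def s_def)
  have p_nonneg: "p v \<ge> 0" if "v < V" for v using simp_p that by (simp add: in_simplex_nat_def)
  have p_sum: "(\<Sum>v<V. p v) = 1" using simp_p by (simp add: in_simplex_nat_def)
  have r_nonneg: "r k v \<ge> 0" if "v < V" for k v
    using spos[OF that] pphi that by (simp add: r_def less_imp_le)
  have th_r: "\<theta>$k * r k v \<le> 1" if "v < V" for k v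
  proof -
    have "\<theta>$k * phi k v \<le> s v" unfolding s_def
      by (rule member_le_sum[where f = "\<lambda>i. \<theta>$i * phi i v"]) (use pphi pth that in \<open>auto intro: less_imp_le\<close>)
    thus ?thesis using spos[OF that] by (simp add: r_def divide_simps)
  qed
  define m where "m v = kmax phi v" for v
  define ratio where "ratio v = (\<Sum>j\<in>UNIV - {kmax phi v}. phi j v) / phi (kmax phi v) v" for v
  have ratio_le: "ratio v \<le> eps" if "v < V" for v
    unfolding eps_def sparsity_def ratio_def using that by (intro Max_ge) auto
  have ratio_nonneg: "ratio v \<ge> 0" if "v < V" for v
    unfolding ratio_def using pphi that by (intro divide_nonneg_nonneg sum_nonneg) (auto intro: less_imp_le)
  have eps_nonneg: "eps \<ge> 0" using ratio_le[of 0] ratio_nonneg[of 0] V1 by simp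
  have spars: "(\<Sum>j\<in>UNIV - {m v}. phi j v) \<le> eps * phi (m v) v" if "v < V" for v
    using ratio_le[OF that] pphi that by (simp add: ratio_def m_def pos_divide_le_eq)
  have off_small: "phi j v \<le> eps * phi (m v) v" if "v < V" "j \<noteq> m v" for j v
  proof -
    have "phi j v \<le> (\<Sum>j\<in>UNIV - {m v}. phi j v)"
      by (rule member_le_sum) (use pphi that in \<open>auto intro: less_imp_le\<close>)
    thus ?thesis using spars[OF that(1)] by linarith
  qed
  have s_ge: "tmin * phi (m v) v \<le> s v" if "v < V" for v
  proof -
    have "\<theta>$(m v) * phi (m v) v \<le> s v" unfolding s_def
      by (rule member_le_sum[where f = "\<lambda>i. \<theta>$i * phi i v"]) (use pphi pth that in \<open>auto intro: less_imp_le\<close>)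
    moreover have "tmin * phi (m v) v \<le> \<theta>$(m v) * phi (m v) v"
      using tmin_le pphi that by (simp add: mult_right_mono less_imp_le)
    ultimately show ?thesis by linarith
  qed
  have r_small: "r j v \<le> eps / tmin" if "v < V" "j \<noteq> m v" for j v
  proof -
    have "phi j v * tmin \<le> eps * phi (m v) v * tmin"
      using off_small[OF that] tmin_pos by (simp add: mult_right_mono)
    also have "\<dots> \<le> eps * s v"
      using s_ge[OF that(1)] eps_nonneg by (simp add: mult_left_mono mult.commute mult.left_commute)
    finally have "phi j v * tmin \<le> eps * s v" .
    thus ?thesis using spos[OF that(1)] tmin_pos by (simp add: r_def divide_simps)
  qed
  have one_minus_small: "1 - \<theta>$k * r k v \<le> eps / tmin" if "v < V" "k = m v" for k v
  proof -
    have "s v = \<theta>$k * phi k v + (\<Sum>i\<in>UNIV - {k}. \<theta>$i * phi i v)"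
      unfolding s_def by (rule sum.remove) auto
    moreover have "(\<Sum>i\<in>UNIV - {k}. \<theta>$i * phi i v) \<le> (\<Sum>i\<in>UNIV - {k}. phi i v)"
      by (rule sum_mono) (use th_le1 pphi that in \<open>auto intro: mult_left_le_one_le less_imp_le\<close>)
    ultimately have "s v - \<theta>$k * phi k v \<le> eps * phi k v" using spars[OF that(1)] that(2) by simp
    hence "(s v - \<theta>$k * phi k v) * tmin \<le> eps * phi k v * tmin"
      using tmin_pos by (simp add: mult_right_mono)
    also have "\<dots> \<le> eps * s v"
      using s_ge[OF that(1)] eps_nonneg that(2) by (simp add: mult_left_mono mult.commute mult.left_commute)
    finally have "(s v - \<theta>$k * phi k v) * tmin \<le> eps * s v" .
    thus ?thesis using spos[OF that(1)] tmin_pos by (simp add: r_def divide_simps)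
  qed
  have Y: "(- hessian (Hfun V p phi) \<theta>) $ i $ j = (\<Sum>v<V. p v * r i v * r j v)" for i j
  proof -
    have "(- hessian (Hfun V p phi) \<theta>) $ i $ j = (\<Sum>v<V. p v * phi i v * phi j v / (s v)\<^sup>2)"
      using hess_entry[OF pphi pth, of p i j] by (simp add: s_def sum_negf)
    also have "\<dots> = (\<Sum>v<V. p v * r i v * r j v)"
      by (intro sum.cong refl) (simp add: r_def power2_eq_square)
    finally show ?thesis .
  qed
  have Zent: "Z $ i $ j = sqrt (\<theta>$i) * sqrt (\<theta>$j) * (\<Sum>v<V. p v * r i v * r j v)" for i j
    unfolding Z_def diag_mult_entry Y by simp
  have Zsym: "Z $ i $ j = Z $ j $ i" for i j
    unfolding Zent by (simp add: mult_ac)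
  define B where "B = 2 * eps / tmin"
  have entry: "\<bar>(Z - mat 1) $ i $ j\<bar> \<le> B" for i j
  proof (cases "i = j")
    case True
    have term_bd: "p v * r i v * (1 - \<theta>$i * r i v) \<le> eps / tmin * (p v * r i v + p v)"
      and term_nn: "0 \<le> p v * r i v * (1 - \<theta>$i * r i v)" if "v < V" for v
    proof -
      have rn: "r i v \<ge> 0" using r_nonneg[OF that] .
      have tr: "\<theta>$i * r i v \<le> 1" using th_r[OF that] .
      have "0 \<le> eps / tmin" using eps_nonneg tmin_pos by simp
      have "r i v * (1 - \<theta>$i * r i v) \<le> eps / tmin * (r i v + 1)"
      proof (cases "i = m v")
        case True
        have "r i v * (1 - \<theta>$i * r i v) \<le> r i v * (eps / tmin)"
          using mult_left_mono[OF one_minus_small[OF that True] rn] .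
        thus ?thesis using \<open>0 \<le> eps / tmin\<close> by (simp add: algebra_simps)
      next
        case False
        have "r i v * (1 - \<theta>$i * r i v) \<le> r i v"
          using rn th_nonneg[of i] by (simp add: algebra_simps)
        also have "\<dots> \<le> eps / tmin" using r_small[OF that False] .
        finally have a: "r i v * (1 - \<theta>$i * r i v) \<le> eps / tmin" .
        have b: "0 \<le> eps / tmin * r i v" using \<open>0 \<le> eps / tmin\<close> rn by (rule mult_nonneg_nonneg)
        have c: "eps / tmin * (r i v + 1) = eps / tmin * r i v + eps / tmin" by (simp add: distrib_left)
        show ?thesis using a b c by linarith
      qed
      hence "p v * (r i v * (1 - \<theta>$i * r i v)) \<le> p v * (eps / tmin * (r i v + 1))"
        using p_nonneg[OF that] by (rule mult_left_mono)
      thus "p v * r i v * (1 - \<theta>$i * r i v) \<le> eps / tmin * (p v * r i v + p v)"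
        by (simp add: algebra_simps)
      show "0 \<le> p v * r i v * (1 - \<theta>$i * r i v)"
        using p_nonneg[OF that] rn tr by simp
    qed
    have "1 - Z $ i $ i = (\<Sum>v<V. p v * r i v) - \<theta>$i * (\<Sum>v<V. p v * r i v * r i v)"
      using G1[of i] th_nonneg[of i] by (simp add: Zent)
    also have "\<dots> = (\<Sum>v<V. p v * r i v * (1 - \<theta>$i * r i v))"
      by (simp add: sum_distrib_left sum_subtractf[symmetric] algebra_simps)
    finally have eq: "1 - Z $ i $ i = (\<Sum>v<V. p v * r i v * (1 - \<theta>$i * r i v))" .
    have "(\<Sum>v<V. p v * r i v * (1 - \<theta>$i * r i v)) \<le> (\<Sum>v<V. eps / tmin * (p v * r i v + p v))"
      by (rule sum_mono) (use term_bd in auto)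
    also have "\<dots> = eps / tmin * ((\<Sum>v<V. p v * r i v) + (\<Sum>v<V. p v))"
      by (simp only: sum.distrib[symmetric] sum_distrib_left)
    also have "\<dots> = B" using G1[of i] p_sum by (simp add: B_def)
    finally have up: "1 - Z $ i $ i \<le> B" using eq by simp
    have "0 \<le> 1 - Z $ i $ i" unfolding eq by (rule sum_nonneg) (use term_nn in auto)
    thus ?thesis using up True by (simp add: mat_def)
  next
    case False
    have term_bd: "p v * r i v * r j v \<le> eps / tmin * (p v * r i v + p v * r j v)" if "v < V" for v
    proof -
      have ri: "r i v \<ge> 0" and rj: "r j v \<ge> 0" using r_nonneg[OF that] by auto
      have "r i v * r j v \<le> eps / tmin * (r i v + r j v)"
      proof (cases "j = m v")
        case False
        have "r i v * r j v \<le> r i v * (eps / tmin)"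
          using mult_left_mono[OF r_small[OF that False] ri] .
        moreover have "0 \<le> eps / tmin * r j v" using eps_nonneg tmin_pos rj by simp
        ultimately show ?thesis by (simp add: algebra_simps)
      next
        case True
        hence "i \<noteq> m v" using \<open>i \<noteq> j\<close> by simp
        have "r i v * r j v \<le> (eps / tmin) * r j v"
          using mult_right_mono[OF r_small[OF that \<open>i \<noteq> m v\<close>] rj] .
        moreover have "0 \<le> eps / tmin * r i v" using eps_nonneg tmin_pos ri by simp
        ultimately show ?thesis by (simp add: algebra_simps)
      qed
      hence "p v * (r i v * r j v) \<le> p v * (eps / tmin * (r i v + r j v))"
        using p_nonneg[OF that] by (rule mult_left_mono)
      thus ?thesis by (simp add: algebra_simps)
    qed
    have nn: "0 \<le> (\<Sum>v<V. p v * r i v * r j v)"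
      by (rule sum_nonneg) (use p_nonneg r_nonneg in auto)
    have "(\<Sum>v<V. p v * r i v * r j v) \<le> (\<Sum>v<V. eps / tmin * (p v * r i v + p v * r j v))"
      by (rule sum_mono) (use term_bd in auto)
    also have "\<dots> = eps / tmin * ((\<Sum>v<V. p v * r i v) + (\<Sum>v<V. p v * r j v))"
      by (simp only: sum.distrib[symmetric] sum_distrib_left)
    also have "\<dots> = B" using G1[of i] G1[of j] by (simp add: B_def)
    finally have up: "(\<Sum>v<V. p v * r i v * r j v) \<le> B" .
    have sq: "0 \<le> sqrt (\<theta>$i) * sqrt (\<theta>$j)" "sqrt (\<theta>$i) * sqrt (\<theta>$j) \<le> 1"
      using th_nonneg th_le1 by (auto intro: mult_le_one)
    have "Z $ i $ j \<le> 1 * B"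
      unfolding Zent by (rule mult_mono) (use sq up nn in auto)
    moreover have "0 \<le> Z $ i $ j" unfolding Zent using sq nn by simp
    ultimately show ?thesis using False by (simp add: mat_def)
  qed
  have Bnn: "0 \<le> B" using eps_nonneg tmin_pos by (simp add: B_def)
  have "frob_norm (Z - mat 1) \<le> sqrt (\<Sum>i\<in>(UNIV::'k set). \<Sum>j\<in>(UNIV::'k set). B\<^sup>2)"
    unfolding frob_norm_def
  proof (rule real_sqrt_le_mono, intro sum_mono)
    fix i j
    show "((Z - mat 1) $ i $ j)\<^sup>2 \<le> B\<^sup>2"
      using entry[of i j] Bnn by (metis abs_le_square_iff abs_of_nonneg)
  qed
  also have "\<dots> = real K * B" using Bnn by (simp add: K_def real_sqrt_mult power2_eq_square[of "real _"] )
  finally have frob_le: "frob_norm (Z - mat 1) \<le> real K * B" .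
  have ep: "2 * real K * eps / tmin \<le> eps * sqrt (Ffun K tmin tmax eps)"
           "eps * sqrt (Ffun K tmin tmax eps) < 1/2"
    using eps_part[OF tmin_pos tmin_tmax tmax_le1 K1 eps_nonneg] eps_lt
    by (auto simp: eps_def K_def tmin_def tmax_def)
  have frob_half: "frob_norm (Z - mat 1) \<le> 1/2"
    using frob_le ep by (simp add: B_def)
  let ?E = "{\<mu>. \<exists>x. x \<noteq> 0 \<and> Z *v x = \<mu> *\<^sub>R x}"
  have finE: "finite ?E" by (rule eig_finite) (rule Zsym)
  have neE: "?E \<noteq> {}" using eig_exists[of Z] Zsym by blast
  have "lambda_min Z \<in> ?E" unfolding lambda_min_def using finE neE by (rule Min_in)
  then obtain x where "x \<noteq> 0" "Z *v x = lambda_min Z *\<^sub>R x" by blast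
  hence "\<bar>lambda_min Z - 1\<bar> \<le> frob_norm (Z - mat 1)" by (rule eig_bound)
  hence lm: "lambda_min Z \<ge> 1/2" using frob_half by linarith
  have fnn: "0 \<le> frob_norm (Z - mat 1)" by (simp add: frob_norm_def sum_nonneg)
  have "frob_norm (Z - mat 1) / sqrt (lambda_min Z) \<le> frob_norm (Z - mat 1) / sqrt (1/2)"
    using lm fnn by (intro divide_left_mono) (auto simp: real_sqrt_le_mono)
  also have "\<dots> = sqrt 2 * frob_norm (Z - mat 1)"
    by (simp add: real_sqrt_divide field_simps)
  also have "\<dots> \<le> sqrt 2 * (real K * B)" using frob_le by simp
  also have "\<dots> \<le> 3/2 * (real K * B)"
  proof -
    have "sqrt 2 \<le> 3/2" by (rule real_le_lsqrt) (auto simp: power2_eq_square)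
    moreover have "0 \<le> real K * B" using Bnn by simp
    ultimately show ?thesis by (rule mult_right_mono)
  qed
  also have "\<dots> = 3 * real CARD('k) / vmin \<theta> * sparsity V phi"
    by (simp add: B_def K_def tmin_def eps_def)
  finally show ?thesis .
qed


theorem lemma6:
  assumes "CARD('k::finite) \<ge> 3"
  shows "\<exists>C :: real \<Rightarrow> real \<Rightarrow> real.
    (\<forall>tmin tmax. C tmin tmax > 0) \<and>
    (\<forall>(V::nat) (phi :: 'k \<Rightarrow> nat \<Rightarrow> real) (p :: nat \<Rightarrow> real) (\<theta> :: real^'k).
       V \<ge> 1 \<and>
       (\<forall>k. in_simplex_nat V (phi k)) \<and> (\<forall>k. \<forall>v<V. phi k v > 0) \<and>
       in_simplex_nat V p \<and>
       in_simplex_vec \<theta> \<and> (\<forall>k. \<theta> $ k > 0) \<and>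
       (\<forall>\<theta>'. in_simplex_vec \<theta>' \<longrightarrow> Hfun V p phi \<theta>' \<le> Hfun V p phi \<theta>) \<and>
       (\<forall>v<V. \<exists>!k. \<forall>j. phi j v \<le> phi k v) \<and>
       sparsity V phi < eps0 CARD('k) (vmin \<theta>) (vmax \<theta>)
     \<longrightarrow>
       (let Y = - hessian (Hfun V p phi) \<theta>;
            S = diag_mat (\<lambda>k. sqrt (\<theta> $ k));
            Z = S ** Y ** S
        in frob_norm (Z - mat 1) / sqrt (lambda_min Z)
             \<le> C (vmin \<theta>) (vmax \<theta>) * sparsity V phi))"
proof (rule exI[of _ "\<lambda>tmin tmax. if tmin > 0 then 3 * real CARD('k) / tmin else 1"], intro conjI allI impI)
  fix tmin tmax :: real
  show "0 < (if tmin > 0 then 3 * real CARD('k) / tmin else 1)" by simp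
next
  fix V :: nat and phi :: "'k \<Rightarrow> nat \<Rightarrow> real" and p :: "nat \<Rightarrow> real" and \<theta> :: "real^'k"
  assume h: "V \<ge> 1 \<and>
       (\<forall>k. in_simplex_nat V (phi k)) \<and> (\<forall>k. \<forall>v<V. phi k v > 0) \<and>
       in_simplex_nat V p \<and>
       in_simplex_vec \<theta> \<and> (\<forall>k. \<theta> $ k > 0) \<and>
       (\<forall>\<theta>'. in_simplex_vec \<theta>' \<longrightarrow> Hfun V p phi \<theta>' \<le> Hfun V p phi \<theta>) \<and>
       (\<forall>v<V. \<exists>!k. \<forall>j. phi j v \<le> phi k v) \<and>
       sparsity V phi < eps0 CARD('k) (vmin \<theta>) (vmax \<theta>)"
  have "vmin \<theta> \<in> range (\<lambda>k. \<theta>$k)" unfolding vmin_def by (intro Min_in) auto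
  hence vpos: "vmin \<theta> > 0" using h by auto
  have mb: "frob_norm (diag_mat (\<lambda>k. sqrt (\<theta>$k)) ** (- hessian (Hfun V p phi) \<theta>) ** diag_mat (\<lambda>k. sqrt (\<theta>$k)) - mat 1)
      / sqrt (lambda_min (diag_mat (\<lambda>k. sqrt (\<theta>$k)) ** (- hessian (Hfun V p phi) \<theta>) ** diag_mat (\<lambda>k. sqrt (\<theta>$k))))
      \<le> 3 * real CARD('k) / vmin \<theta> * sparsity V phi"
    using h by (intro main_bound) auto
  show "let Y = - hessian (Hfun V p phi) \<theta>;
            S = diag_mat (\<lambda>k. sqrt (\<theta> $ k));
            Z = S ** Y ** S
        in frob_norm (Z - mat 1) / sqrt (lambda_min Z)
             \<le> (\<lambda>tmin tmax. if tmin > 0 then 3 * real CARD('k) / tmin else 1) (vmin \<theta>) (vmax \<theta>) * sparsity V phi"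
    using mb vpos by (simp add: Let_def)
qed

end
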